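(* For $m,n\in\mathbb N$ and $k=\min\{m,n\}$, the expected value of $\|G\|$ for a random bipartite graph $G\in\mathcal G(m,n,1/2)$ satisfies \[\mathbb E_{m,n,1/2}(\|G\|)\ge\frac18\sqrt{\frac k2}-1.\]
   Context: $\mathcal G(m,n,p)$ is the probability space of bipartite graphs $G\subseteq\{r_1,\dots,r_m\}\times\{c_1,\dots,c_n\}$ in which each of the $mn$ possible edges is present independently with probability $p$. The biadjacency matrix $M(G)$ is the $m\times n$ $0$–$1$ matrix with $(i,j)$ entry $1$ iff $(r_i,c_j)$ is an edge, and $\|G\|=\|M(G)\|_\bullet=\sup\{\|M(G)\bullet X\|:X\in M_{m,n}(\mathbb F),\|X\|\le1\}$ is the Schur norm (entrywise product, operator norm $\ell^2_n\to\ell^2_m$, $\mathbb F\in\{\mathbb R,\mathbb C\}$). *)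

theory Defs
  imports "HOL-Analysis.Analysis"
begin

text \<open>Vectors in F^n are functions nat => F, only indices < n matter;
  m x n matrices are functions nat => nat => F, only indices i < m, j < n matter.\<close>

definition l2norm :: "nat \<Rightarrow> (nat \<Rightarrow> 'a::real_normed_field) \<Rightarrow> real" where
  "l2norm n x = sqrt (\<Sum>j<n. (norm (x j))^2)"

definition mat_apply :: "nat \<Rightarrow> (nat \<Rightarrow> nat \<Rightarrow> 'a::real_normed_field) \<Rightarrow> (nat \<Rightarrow> 'a) \<Rightarrow> (nat \<Rightarrow> 'a)" where
  "mat_apply n A x = (\<lambda>i. \<Sum>j<n. A i j * x j)"

definition mat_opnorm :: "nat \<Rightarrow> nat \<Rightarrow> (nat \<Rightarrow> nat \<Rightarrow> 'a::real_normed_field) \<Rightarrow> real" where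
  "mat_opnorm m n A = Sup {l2norm m (mat_apply n A x) | x. l2norm n x \<le> 1}"

definition schur_prod :: "(nat \<Rightarrow> nat \<Rightarrow> 'a::real_normed_field) \<Rightarrow> (nat \<Rightarrow> nat \<Rightarrow> 'a) \<Rightarrow> (nat \<Rightarrow> nat \<Rightarrow> 'a)" where
  "schur_prod M X = (\<lambda>i j. M i j * X i j)"

definition schur_norm :: "nat \<Rightarrow> nat \<Rightarrow> (nat \<Rightarrow> nat \<Rightarrow> 'a::real_normed_field) \<Rightarrow> real" where
  "schur_norm m n M = Sup {mat_opnorm m n (schur_prod M X) | X. mat_opnorm m n X \<le> 1}"

text \<open>A bipartite graph G on rows r_0..r_{m-1} and columns c_0..c_{n-1} is its edge set
  E \<subseteq> {..<m} \<times> {..<n}; its biadjacency matrix:\<close>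
definition biadj :: "(nat \<times> nat) set \<Rightarrow> nat \<Rightarrow> nat \<Rightarrow> 'a::real_normed_field" where
  "biadj E i j = (if (i, j) \<in> E then 1 else 0)"

definition graph_norm :: "nat \<Rightarrow> nat \<Rightarrow> (nat \<times> nat) set \<Rightarrow> 'a::real_normed_field itself \<Rightarrow> real" where
  "graph_norm m n E _ = schur_norm m n (biadj E :: nat \<Rightarrow> nat \<Rightarrow> 'a)"

definition expect_G :: "nat \<Rightarrow> nat \<Rightarrow> real \<Rightarrow> ((nat \<times> nat) set \<Rightarrow> real) \<Rightarrow> real" where
  "expect_G m n p f = (\<Sum>E \<in> Pow ({..<m} \<times> {..<n}).
      p ^ card E * (1 - p) ^ (m * n - card E) * f E)"

end

theory Submission
  imports Defs "Jordan_Normal_Form.Determinant"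
begin

definition mv :: "nat \<Rightarrow> (nat \<Rightarrow> nat \<Rightarrow> real) \<Rightarrow> (nat \<Rightarrow> real) \<Rightarrow> nat \<Rightarrow> real" where
  "mv k A x = (\<lambda>i. \<Sum>j<k. A i j * x j)"
definition ip :: "nat \<Rightarrow> (nat \<Rightarrow> real) \<Rightarrow> (nat \<Rightarrow> real) \<Rightarrow> real" where
  "ip k x y = (\<Sum>j<k. x j * y j)"

lemma ip_sym: "ip k x y = ip k y x"
  unfolding ip_def by (simp add: mult.commute)

lemma ip_lin_left: "ip k (\<lambda>i. a * u i + b * v i) w = a * ip k u w + b * ip k v w"
  unfolding ip_def by (simp add: algebra_simps sum.distrib sum_distrib_left)

lemma ip_lin_right: "ip k w (\<lambda>i. a * u i + b * v i) = a * ip k w u + b * ip k w v"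
  using ip_lin_left[of k a u b v w] by (simp add: ip_sym)

lemmas ip_lin_right1 = ip_lin_right[where b=1, simplified]
lemmas ip_lin_left1 = ip_lin_left[where b=1, simplified]

lemma nsq_lin: "ip k (\<lambda>i. a * u i + b * v i) (\<lambda>i. a * u i + b * v i)
   = a^2 * ip k u u + 2*a*b * ip k u v + b^2 * ip k v v"
  by (simp add: ip_lin_left ip_lin_right ip_sym[of k v u] power2_eq_square algebra_simps)

lemmas nsq_lin1 = nsq_lin[where b=1, simplified]

lemma nsq_nonneg: "0 \<le> ip k x x"
  unfolding ip_def by (simp add: sum_nonneg)

lemma ip_cong: "(\<And>i. i < k \<Longrightarrow> x i = x' i) \<Longrightarrow> (\<And>i. i < k \<Longrightarrow> y i = y' i) \<Longrightarrow> ip k x y = ip k x' y'"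
  unfolding ip_def by (rule sum.cong) auto

lemma mv_lin: "mv k A (\<lambda>i. a * u i + b * v i) = (\<lambda>i. a * mv k A u i + b * mv k A v i)"
  unfolding mv_def by (simp add: algebra_simps sum.distrib sum_distrib_left)

lemma mv_cong: "(\<And>i. i < k \<Longrightarrow> x i = x' i) \<Longrightarrow> mv k A x = mv k A x'"
  unfolding mv_def by (intro ext sum.cong) auto

lemma mv_comp: "mv k (\<lambda>i l. \<Sum>j<k. A i j * B j l) x = mv k A (mv k B x)"
proof (rule ext)
  fix i
  have "(\<Sum>j<k. A i j * (\<Sum>l<k. B j l * x l)) = (\<Sum>j<k. \<Sum>l<k. A i j * B j l * x l)"
    by (simp add: sum_distrib_left mult.assoc)
  also have "\<dots> = (\<Sum>l<k. \<Sum>j<k. A i j * B j l * x l)" by (rule sum.swap)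
  also have "\<dots> = (\<Sum>l<k. (\<Sum>j<k. A i j * B j l) * x l)" by (simp add: sum_distrib_right)
  finally show "mv k (\<lambda>i l. \<Sum>j<k. A i j * B j l) x i = mv k A (mv k B x) i"
    unfolding mv_def by simp
qed

lemma ip_transp: "ip k u (mv k A v) = ip k (mv k (\<lambda>i j. A j i) u) v"
proof -
  have "(\<Sum>i<k. u i * (\<Sum>j<k. A i j * v j)) = (\<Sum>i<k. \<Sum>j<k. A i j * u i * v j)"
    by (simp add: sum_distrib_left mult.assoc mult.left_commute)
  also have "\<dots> = (\<Sum>j<k. \<Sum>i<k. A i j * u i * v j)" by (rule sum.swap)
  also have "\<dots> = (\<Sum>j<k. (\<Sum>i<k. A i j * u i) * v j)" by (simp add: sum_distrib_right)
  finally show ?thesis unfolding mv_def ip_def by simp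
qed

lemma right_inverse_exists:
  fixes Q :: "nat \<Rightarrow> nat \<Rightarrow> real"
  assumes inj: "\<And>z. (\<forall>i<k. (\<Sum>j<k. Q i j * z j) = 0) \<Longrightarrow> (\<forall>j<k. z j = 0)"
  shows "\<exists>R. \<forall>i<k. \<forall>l<k. (\<Sum>j<k. Q i j * R j l) = (if i = l then 1 else 0)"
proof -
  define A where "A = mat k k (\<lambda>(i,j). Q i j)"
  have Ac: "A \<in> carrier_mat k k" unfolding A_def by simp
  have "det A \<noteq> 0"
  proof
    assume "det A = 0"
    then obtain v where v: "v \<in> carrier_vec k" "v \<noteq> 0\<^sub>v k" "A *\<^sub>v v = 0\<^sub>v k"
      using det_0_iff_vec_prod_zero_field[OF Ac] by blast
    define z where "z = (\<lambda>j. vec_index v j)"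
    have "\<forall>i<k. (\<Sum>j<k. Q i j * z j) = 0"
    proof (intro allI impI)
      fix i assume i: "i < k"
      have "vec_index (A *\<^sub>v v) i = 0" using v(3) i by simp
      thus "(\<Sum>j<k. Q i j * z j) = 0" using i v(1)
        by (simp add: A_def z_def mult_mat_vec_def scalar_prod_def row_def atLeast0LessThan)
    qed
    then have "\<forall>j<k. z j = 0" by (rule inj)
    then have "v = 0\<^sub>v k" using v(1) by (auto simp: z_def)
    with v(2) show False by simp
  qed
  then have "A \<in> Units (ring_mat TYPE(real) k ())" by (rule det_non_zero_imp_unit[OF Ac])
  then obtain B where B: "B \<in> carrier_mat k k" "A * B = 1\<^sub>m k"
    by (auto simp: Units_def ring_mat_def)
  show ?thesis
  proof (intro exI allI impI)
    fix i l assume i: "i < k" and l: "l < k"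
    have "index_mat (A * B) (i,l) = index_mat (1\<^sub>m k) (i,l)" using B by simp
    then show "(\<Sum>j<k. Q i j * index_mat B (j,l)) = (if i = l then 1 else 0)"
      using i l B(1) by (simp add: A_def scalar_prod_def row_def col_def atLeast0LessThan)
  qed
qed

lemma core:
  fixes S :: "nat \<Rightarrow> nat \<Rightarrow> real" and s :: real
  assumes s: "s > 0"
  shows "\<exists>X. (\<forall>x. ip k (mv k X x) (mv k X x) \<le> ip k x x) \<and>
     (\<Sum>l<k. \<Sum>i<k. S i l * X i l) \<ge>
       2 * s * (\<Sum>l<k. (\<Sum>i<k. S i l * S i l) / s^2 - (\<Sum>j<k. (\<Sum>i<k. S i j * S i l)^2) / s^4)"
proof -
  define c where "c = s^2"
  have c: "c > 0" using s by (simp add: c_def)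
  define P where "P = (\<lambda>j l. \<Sum>i<k. S i j * S i l)"
  define Q where "Q = (\<lambda>j l. (if j = l then c else 0) + P j l)"
  have Psym: "P j l = P l j" for j l unfolding P_def by (simp add: mult.commute)
  have PSS: "mv k P y = mv k (\<lambda>i j. S j i) (mv k S y)" for y
  proof -
    have "P = (\<lambda>i l. \<Sum>j<k. (\<lambda>i j. S j i) i j * S j l)" unfolding P_def by simp
    then show ?thesis by (simp add: mv_comp)
  qed
  have F1: "ip k y (mv k P y) = ip k (mv k S y) (mv k S y)" for y
    by (simp add: PSS ip_transp)
  have Fsym: "ip k u (mv k P v) = ip k (mv k P u) v" for u v
    using ip_transp[of k u P v] Psym by (metis (no_types, lifting) ext)
  have Qy: "mv k Q y i = c * y i + mv k P y i" if "i < k" for y i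
  proof -
    have "(\<Sum>j<k. (if i = j then c else 0) * y j) = (\<Sum>j<k. if i = j then c * y j else 0)"
      by (rule sum.cong) auto
    also have "\<dots> = c * y i" using that by simp
    finally show ?thesis by (simp add: mv_def Q_def distrib_right sum.distrib)
  qed
  have Qinj: "\<forall>j<k. z j = 0" if "\<forall>i<k. (\<Sum>j<k. Q i j * z j) = 0" for z
  proof -
    have "ip k z (mv k Q z) = 0"
      using that unfolding ip_def mv_def by simp
    moreover have "ip k z (mv k Q z) = ip k z (\<lambda>i. c * z i + 1 * mv k P z i)"
      by (rule ip_cong) (simp_all add: Qy)
    ultimately have "c * ip k z z + ip k (mv k S z) (mv k S z) = 0"
      by (simp add: ip_lin_right1 F1)
    moreover have "0 \<le> ip k (mv k S z) (mv k S z)" "0 \<le> ip k z z" by (rule nsq_nonneg)+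
    ultimately have "ip k z z = 0" using c
      by (smt (verit, best) mult_pos_pos)
    then have "\<forall>j\<in>{..<k}. z j * z j = 0" unfolding ip_def
      by (subst (asm) sum_nonneg_eq_0_iff) auto
    then show ?thesis by simp
  qed
  obtain R where R: "\<And>i l. i < k \<Longrightarrow> l < k \<Longrightarrow> (\<Sum>j<k. Q i j * R j l) = (if i = l then 1 else 0)"
    using right_inverse_exists[of k Q] Qinj by blast
  define X where "X = (\<lambda>i l. 2 * s * (\<Sum>j<k. S i j * R j l))"
  have QR: "mv k Q (mv k R x) i = x i" if "i < k" for x i
  proof -
    have "mv k Q (mv k R x) i = mv k (\<lambda>i l. \<Sum>j<k. Q i j * R j l) x i" by (simp add: mv_comp)
    also have "\<dots> = (\<Sum>l<k. (if i = l then 1 else 0) * x l)"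
      unfolding mv_def using that R by (intro sum.cong) auto
    also have "\<dots> = (\<Sum>l<k. if i = l then x l else 0)" by (rule sum.cong) auto
    also have "\<dots> = x i" using that by simp
    finally show ?thesis .
  qed
  have A: "ip k (mv k X x) (mv k X x) \<le> ip k x x" for x
  proof -
    define y where "y = mv k R x"
    have X1: "mv k X x = (\<lambda>i. (2 * s) * mv k S y i + 0 * y i)"
    proof -
      have "mv k X x = mv k (\<lambda>i l. \<Sum>j<k. (\<lambda>i j. 2 * s * S i j) i j * R j l) x"
        unfolding X_def by (simp add: sum_distrib_left mult.assoc)
      also have "\<dots> = mv k (\<lambda>i j. 2 * s * S i j) y" by (simp add: mv_comp y_def)
      finally show ?thesis by (simp add: mv_def sum_distrib_left mult.assoc)
    qed
    have "ip k x x = ip k (\<lambda>i. c * y i + 1 * mv k P y i) (\<lambda>i. c * y i + 1 * mv k P y i)"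
      by (rule ip_cong) (simp_all add: Qy QR y_def[symmetric] flip: QR[of _ x])
    also have "\<dots> = c^2 * ip k y y + 2 * c * ip k (mv k S y) (mv k S y) + ip k (mv k P y) (mv k P y)"
      by (simp add: nsq_lin1 F1)
    finally have ex: "ip k x x = \<dots>" .
    have "ip k (mv k X x) (mv k X x) = 4 * c * ip k (mv k S y) (mv k S y)"
      unfolding X1 nsq_lin by (simp add: c_def power2_eq_square)
    moreover have "0 \<le> ip k (\<lambda>i. (-c) * y i + 1 * mv k P y i) (\<lambda>i. (-c) * y i + 1 * mv k P y i)"
      by (rule nsq_nonneg)
    moreover have "ip k (\<lambda>i. (-c) * y i + 1 * mv k P y i) (\<lambda>i. (-c) * y i + 1 * mv k P y i)
       = c^2 * ip k y y - 2 * c * ip k (mv k S y) (mv k S y) + ip k (mv k P y) (mv k P y)"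
      unfolding nsq_lin F1 by simp
    ultimately show ?thesis using ex by linarith
  qed
  have B: "(\<Sum>i<k. S i l * X i l) \<ge> 2 * s * (P l l / c - (\<Sum>j<k. (P j l)^2) / c^2)" if l: "l < k" for l
  proof -
    define z where "z = (\<lambda>j. R j l)"
    define e where "e = mv k Q z"
    have e: "e i = (if i = l then 1 else 0)" if "i < k" for i
      using R[OF that l] unfolding e_def mv_def z_def by simp
    have ecz: "ip k e w = ip k (\<lambda>i. c * z i + 1 * mv k P z i) w" for w
      by (rule ip_cong) (simp_all add: e_def Qy)
    have Pz: "mv k P (\<lambda>i. c * z i + 1 * mv k P z i) = (\<lambda>i. c * mv k P z i + 1 * mv k P (mv k P z) i)"
      by (rule mv_lin)
    have ipe: "ip k e w = w l" for w
    proof -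
      have "ip k e w = (\<Sum>i<k. (if i = l then w i else 0))"
        unfolding ip_def by (intro sum.cong) (auto simp: e)
      then show ?thesis using l by simp
    qed
    define a where "a = ip k z (mv k P z)"
    define b where "b = ip k (mv k P z) (mv k P z)"
    define d where "d = ip k (mv k P z) (mv k P (mv k P z))"
    define f where "f = ip k (mv k P (mv k P z)) (mv k P (mv k P z))"
    have d0: "d \<ge> 0" unfolding d_def F1 by (rule nsq_nonneg)
    have f0: "f \<ge> 0" unfolding f_def by (rule nsq_nonneg)
    have lhs: "(\<Sum>i<k. S i l * X i l) = 2 * s * (c * a + b)"
    proof -
      have "(\<Sum>i<k. S i l * X i l) = 2 * s * (\<Sum>i<k. \<Sum>j<k. S i l * (S i j * R j l))"
        unfolding X_def by (simp add: sum_distrib_left algebra_simps)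
      also have "(\<Sum>i<k. \<Sum>j<k. S i l * (S i j * R j l)) = (\<Sum>j<k. \<Sum>i<k. S i l * (S i j * R j l))"
        by (rule sum.swap)
      also have "\<dots> = (\<Sum>j<k. P l j * z j)"
        unfolding P_def z_def sum_distrib_right by (simp add: mult.assoc)
      finally have "(\<Sum>i<k. S i l * X i l) = 2 * s * (\<Sum>j<k. P l j * z j)" .
      also have "(\<Sum>j<k. P l j * z j) = ip k e (mv k P z)" by (simp add: ipe mv_def)
      also have "\<dots> = c * a + b" by (simp add: ecz ip_lin_left1 a_def b_def)
      finally show ?thesis .
    qed
    have Pll: "P l l = c^2 * a + 2 * c * b + d"
    proof -
      have "P l l = ip k e (mv k P e)"
      proof -
        have "mv k P e l = (\<Sum>j<k. if j = l then P l j else 0)"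
          unfolding mv_def by (intro sum.cong) (auto simp: e)
        then show ?thesis using l by (simp add: ipe)
      qed
      also have "mv k P e = mv k P (\<lambda>i. c * z i + 1 * mv k P z i)"
        by (rule mv_cong) (simp add: e_def Qy)
      also have "ip k e \<dots> = c^2 * a + 2 * c * b + d"
        unfolding ecz Pz
        by (simp add: ip_lin_left1 ip_lin_right1 a_def b_def d_def Fsym[of "mv k P z" z] ip_sym[of k z] power2_eq_square algebra_simps)
      finally show ?thesis .
    qed
    have P2: "(\<Sum>j<k. (P j l)^2) = c^2 * b + 2 * c * d + f"
    proof -
      have me: "mv k P e j = P j l" if "j < k" for j
      proof -
        have "mv k P e j = (\<Sum>i<k. if i = l then P j i else 0)"
          unfolding mv_def by (intro sum.cong) (auto simp: e)
        then show ?thesis using l by simp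
      qed
      have "(\<Sum>j<k. (P j l)^2) = ip k (mv k P e) (mv k P e)"
        unfolding ip_def by (intro sum.cong) (auto simp: me power2_eq_square)
      also have "mv k P e = mv k P (\<lambda>i. c * z i + 1 * mv k P z i)"
        by (rule mv_cong) (simp add: e_def Qy)
      also have "ip k (mv k P (\<lambda>i. c * z i + 1 * mv k P z i)) (mv k P (\<lambda>i. c * z i + 1 * mv k P z i)) = c^2 * b + 2 * c * d + f"
        unfolding Pz nsq_lin by (simp add: b_def d_def f_def)
      finally show ?thesis .
    qed
    have "P l l / c - (\<Sum>j<k. (P j l)^2) / c^2 = c * a + b - d / c - f / c^2"
      unfolding Pll P2 using c by (simp add: field_simps power2_eq_square)
    also have "\<dots> \<le> c * a + b"
    proof -
      have "d / c \<ge> 0" "f / c^2 \<ge> 0" using d0 f0 c by simp_all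
      then show ?thesis by linarith
    qed
    finally show ?thesis unfolding lhs using s by simp
  qed
  have "(\<Sum>l<k. \<Sum>i<k. S i l * X i l) \<ge> (\<Sum>l<k. 2 * s * (P l l / c - (\<Sum>j<k. (P j l)^2) / c^2))"
    by (rule sum_mono) (use B in auto)
  also have "(\<Sum>l<k. 2 * s * (P l l / c - (\<Sum>j<k. (P j l)^2) / c^2))
     = 2 * s * (\<Sum>l<k. (\<Sum>i<k. S i l * S i l) / s^2 - (\<Sum>j<k. (\<Sum>i<k. S i j * S i l)^2) / s^4)"
    by (simp add: sum_distrib_left P_def c_def power_mult[symmetric])
  finally have B': "(\<Sum>l<k. \<Sum>i<k. S i l * X i l) \<ge> 2 * s * (\<Sum>l<k. (\<Sum>i<k. S i l * S i l) / s^2 - (\<Sum>j<k. (\<Sum>i<k. S i j * S i l)^2) / s^4)" .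
  have A': "\<forall>x. ip k (mv k X x) (mv k X x) \<le> ip k x x" using A by blast
  show ?thesis by (rule exI[of _ X], rule conjI[OF A' B'])
qed



definition Bsum :: "nat \<Rightarrow> nat \<Rightarrow> (nat \<Rightarrow> nat \<Rightarrow> 'a::real_normed_field) \<Rightarrow> real" where
  "Bsum m n A = (\<Sum>i<m. \<Sum>j<n. norm (A i j))"

lemma l2norm_L2: "l2norm n x = L2_set (\<lambda>j. norm (x j)) {..<n}"
  unfolding l2norm_def L2_set_def by simp

lemma l2norm_nonneg: "0 \<le> l2norm n x"
  unfolding l2norm_L2 by simp

lemma Bsum_nonneg: "0 \<le> Bsum m n A"
  unfolding Bsum_def by (intro sum_nonneg) auto

lemma G1: "l2norm m (mat_apply n A x) \<le> Bsum m n A * l2norm n x"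
proof -
  have "l2norm m (mat_apply n A x) \<le> (\<Sum>i<m. norm (mat_apply n A x i))"
    unfolding l2norm_L2 by (rule L2_set_le_sum) auto
  also have "\<dots> \<le> (\<Sum>i<m. \<Sum>j<n. norm (A i j) * l2norm n x)"
  proof (rule sum_mono)
    fix i assume "i \<in> {..<m}"
    have "norm (mat_apply n A x i) \<le> (\<Sum>j<n. norm (A i j * x j))"
      unfolding mat_apply_def by (rule norm_sum)
    also have "\<dots> \<le> (\<Sum>j<n. norm (A i j) * l2norm n x)"
    proof (rule sum_mono)
      fix j assume j: "j \<in> {..<n}"
      have "norm (x j) \<le> l2norm n x" unfolding l2norm_L2
        by (rule member_le_L2_set) (use j in auto)
      then show "norm (A i j * x j) \<le> norm (A i j) * l2norm n x"
        by (simp add: norm_mult mult_left_mono)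
    qed
    finally show "norm (mat_apply n A x i) \<le> (\<Sum>j<n. norm (A i j) * l2norm n x)" .
  qed
  also have "\<dots> = Bsum m n A * l2norm n x"
    unfolding Bsum_def by (simp add: sum_distrib_right)
  finally show ?thesis .
qed

lemma opnorm_bdd: "bdd_above {l2norm m (mat_apply n A x) | x. l2norm n x \<le> 1}"
proof (rule bdd_aboveI)
  fix y assume "y \<in> {l2norm m (mat_apply n A x) | x. l2norm n x \<le> 1}"
  then obtain x where x: "y = l2norm m (mat_apply n A x)" "l2norm n x \<le> 1" by blast
  have "y \<le> Bsum m n A * l2norm n x" using G1 x by simp
  also have "\<dots> \<le> Bsum m n A * 1" using x(2) Bsum_nonneg[of m n A] by (rule mult_left_mono)
  finally show "y \<le> Bsum m n A" by simp
qed

lemma opnorm_ge: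
  assumes "l2norm n x \<le> 1"
  shows "l2norm m (mat_apply n A x) \<le> mat_opnorm m n A"
  unfolding mat_opnorm_def by (rule cSup_upper) (use assms opnorm_bdd in auto)

lemma opnorm_le_Bsum: "mat_opnorm m n A \<le> Bsum m n A"
  unfolding mat_opnorm_def
proof (rule cSup_least)
  show "{l2norm m (mat_apply n A x) | x. l2norm n x \<le> 1} \<noteq> {}"
  proof -
    have "l2norm n (\<lambda>_. 0::'a) \<le> 1" by (simp add: l2norm_def)
    then show ?thesis by blast
  qed
next
  fix y assume "y \<in> {l2norm m (mat_apply n A x) | x. l2norm n x \<le> 1}"
  then obtain x where x: "y = l2norm m (mat_apply n A x)" "l2norm n x \<le> 1" by blast
  have "y \<le> Bsum m n A * l2norm n x" using G1 x by simp
  also have "\<dots> \<le> Bsum m n A * 1" using x(2) Bsum_nonneg[of m n A] by (rule mult_left_mono)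
  finally show "y \<le> Bsum m n A" by simp
qed

lemma entry_le_opnorm:
  assumes i: "i < m" and j: "j < n"
  shows "norm (A i j) \<le> mat_opnorm m n (A :: nat \<Rightarrow> nat \<Rightarrow> 'a::real_normed_field)"
proof -
  define e :: "nat \<Rightarrow> 'a" where "e = (\<lambda>l. if l = j then 1 else 0)"
  have "l2norm n e = sqrt (\<Sum>l<n. if l = j then 1 else 0)"
    unfolding l2norm_def e_def by (intro arg_cong[where f=sqrt] sum.cong) auto
  also have "\<dots> = 1" using j by simp
  finally have e1: "l2norm n e \<le> 1" by simp
  have ae: "mat_apply n A e i' = A i' j" for i'
  proof -
    have "mat_apply n A e i' = (\<Sum>l<n. if l = j then A i' j else 0)"
      unfolding mat_apply_def e_def by (intro sum.cong) auto
    then show ?thesis using j by simp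
  qed
  have "norm (A i j) \<le> l2norm m (mat_apply n A e)"
    unfolding l2norm_L2 ae[symmetric] by (rule member_le_L2_set) (use i in auto)
  also have "\<dots> \<le> mat_opnorm m n A" by (rule opnorm_ge[OF e1])
  finally show ?thesis .
qed

lemma schur_bdd:
  assumes M: "\<And>i j. norm (M i j) \<le> (1::real)"
  shows "bdd_above {mat_opnorm m n (schur_prod M X) | X. mat_opnorm m n X \<le> (1::real)}"
proof (rule bdd_aboveI)
  fix y assume "y \<in> {mat_opnorm m n (schur_prod M X) | X. mat_opnorm m n X \<le> 1}"
  then obtain X where X: "y = mat_opnorm m n (schur_prod M X)" "mat_opnorm m n X \<le> 1" by blast
  have "y \<le> Bsum m n (schur_prod M X)" using X(1) opnorm_le_Bsum by simp
  also have "\<dots> \<le> (\<Sum>i<m. \<Sum>j<n. 1)"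
    unfolding Bsum_def
  proof (intro sum_mono)
    fix i j assume i: "i \<in> {..<m}" and j: "j \<in> {..<n}"
    have "norm (X i j) \<le> 1" using entry_le_opnorm[of i m j n X] i j X(2) by simp
    then show "norm (schur_prod M X i j) \<le> 1"
      unfolding schur_prod_def norm_mult using M[of i j]
      by (simp add: mult_le_one)
  qed
  finally show "y \<le> real (m * n)" by simp
qed

lemma schur_ge:
  assumes M: "\<And>i j. norm (M i j) \<le> (1::real)" and X: "mat_opnorm m n X \<le> 1"
  shows "mat_opnorm m n (schur_prod M X) \<le> schur_norm m n M"
  unfolding schur_norm_def by (rule cSup_upper) (use X schur_bdd[OF M] in auto)


lemma sum_prefix:
  fixes f :: "nat \<Rightarrow> 'b::comm_monoid_add"
  assumes "k \<le> n"
  shows "(\<Sum>j<n. if j < k then f j else 0) = (\<Sum>j<k. f j)"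
  by (rule sum.mono_neutral_cong_right) (use assms in auto)

lemma schur_lower:
  fixes X :: "nat \<Rightarrow> nat \<Rightarrow> real"
  assumes k: "0 < k" "k \<le> m" "k \<le> n"
  and contr: "\<And>x::nat \<Rightarrow> 'a::real_normed_field.
        (\<Sum>i<k. (norm (\<Sum>j<k. of_real (X i j) * x j))^2) \<le> (\<Sum>j<k. (norm (x j))^2)"
  shows "(\<Sum>i<k. \<Sum>l<k. (if (i,l) \<in> E then 1 else 0) * X i l) / k
          \<le> schur_norm m n (biadj E :: nat \<Rightarrow> nat \<Rightarrow> 'a)"
proof -
  define X' :: "nat \<Rightarrow> nat \<Rightarrow> 'a" where "X' = (\<lambda>i j. if i < k \<and> j < k then of_real (X i j) else 0)"
  have MA: "mat_apply n X' x i = (if i < k then (\<Sum>j<k. of_real (X i j) * x j) else 0)" for x i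
  proof -
    have "mat_apply n X' x i = (\<Sum>j<n. if j < k then (if i < k then of_real (X i j) * x j else 0) else 0)"
      unfolding mat_apply_def X'_def by (intro sum.cong) auto
    also have "\<dots> = (\<Sum>j<k. (if i < k then of_real (X i j) * x j else 0))"
      by (rule sum_prefix) (use k in auto)
    finally show ?thesis by simp
  qed
  have X'1: "mat_opnorm m n X' \<le> 1"
    unfolding mat_opnorm_def
  proof (rule cSup_least)
    have "l2norm n (\<lambda>_. 0::'a) \<le> 1" by (simp add: l2norm_def)
    then show "{l2norm m (mat_apply n X' x) | x. l2norm n x \<le> 1} \<noteq> {}" by blast
  next
    fix y assume "y \<in> {l2norm m (mat_apply n X' x) | x. l2norm n x \<le> 1}"
    then obtain x where x: "y = l2norm m (mat_apply n X' x)" "l2norm n x \<le> 1" by blast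
    have "(\<Sum>i<m. (norm (mat_apply n X' x i))^2) = (\<Sum>i<m. if i < k then (norm (\<Sum>j<k. of_real (X i j) * x j))^2 else 0)"
      by (intro sum.cong) (auto simp: MA)
    also have "\<dots> = (\<Sum>i<k. (norm (\<Sum>j<k. of_real (X i j) * x j))^2)"
      by (rule sum_prefix) (use k in auto)
    also have "\<dots> \<le> (\<Sum>j<k. (norm (x j))^2)" by (rule contr)
    also have "\<dots> \<le> (\<Sum>j<n. (norm (x j))^2)"
      by (rule sum_mono2) (use k in auto)
    finally have "y \<le> l2norm n x" unfolding x l2norm_def by (rule real_sqrt_le_mono)
    then show "y \<le> 1" using x(2) by simp
  qed
  define M :: "nat \<Rightarrow> nat \<Rightarrow> 'a" where "M = biadj E"
  have M1: "norm (M i j) \<le> 1" for i j by (simp add: M_def biadj_def)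
  have S1: "mat_opnorm m n (schur_prod M X') \<le> schur_norm m n M"
    by (rule schur_ge[OF M1 X'1])
  define r where "r = (\<lambda>i. (\<Sum>j<k. (if (i,j) \<in> E then 1 else 0) * X i j))"
  define v :: "nat \<Rightarrow> 'a" where "v = (\<lambda>j. if j < k then of_real (1 / sqrt k) else 0)"
  have v1: "l2norm n v \<le> 1"
  proof -
    have "(\<Sum>j<n. (norm (v j))^2) = (\<Sum>j<n. if j < k then 1 / real k else 0)"
      unfolding v_def by (intro sum.cong) (use k in \<open>auto simp: power_divide norm_divide\<close>)
    also have "\<dots> = (\<Sum>j<k. 1 / real k)" by (rule sum_prefix) (use k in auto)
    also have "\<dots> = 1" using k by simp
    finally show ?thesis unfolding l2norm_def by simp
  qed
  define y where "y = mat_apply n (schur_prod M X') v"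
  have y: "y i = of_real (r i / sqrt k)" if "i < k" for i
  proof -
    have "y i = (\<Sum>j<n. if j < k then of_real ((if (i,j) \<in> E then 1 else 0) * X i j / sqrt k) else 0)"
      unfolding y_def mat_apply_def schur_prod_def M_def biadj_def X'_def v_def
      by (intro sum.cong) (use that in auto)
    also have "\<dots> = (\<Sum>j<k. of_real ((if (i,j) \<in> E then 1 else 0) * X i j / sqrt k))"
      by (rule sum_prefix) (use k in auto)
    also have "\<dots> = of_real (r i / sqrt k)"
      unfolding r_def by (simp add: sum_divide_distrib)
    finally show ?thesis .
  qed
  have "(\<Sum>i<k. r i) / k = (\<Sum>i<k. (r i / sqrt k) * (1 / sqrt k))"
    using k by (simp add: sum_divide_distrib)
  also have "\<dots> \<le> (\<Sum>i<k. \<bar>norm (y i)\<bar> * \<bar>1 / sqrt k\<bar>)"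
  proof (rule sum_mono)
    fix i assume i: "i \<in> {..<k}"
    have "norm (y i) = \<bar>r i / sqrt k\<bar>" proof -
      have "y i = of_real (r i / sqrt k)" using y i by simp
      then show ?thesis by (simp only: norm_of_real)
    qed
    moreover have "r i / sqrt k \<le> \<bar>r i / sqrt k\<bar>" by (rule abs_ge_self)
    ultimately show "(r i / sqrt k) * (1 / sqrt k) \<le> \<bar>norm (y i)\<bar> * \<bar>1 / sqrt k\<bar>"
      by (metis abs_ge_self abs_idempotent abs_mult mult_right_mono)
  qed
  also have "\<dots> \<le> L2_set (\<lambda>i. norm (y i)) {..<k} * L2_set (\<lambda>i. 1 / sqrt k) {..<k}"
    by (rule L2_set_mult_ineq)
  also have "L2_set (\<lambda>i. 1 / sqrt k) {..<k} = 1"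
    using k by (simp add: L2_set_constant)
  also have "L2_set (\<lambda>i. norm (y i)) {..<k} * 1 \<le> l2norm m y"
    unfolding l2norm_def L2_set_def
    unfolding mult_1_right by (rule real_sqrt_le_mono, rule sum_mono2) (use k in auto)
  also have "\<dots> \<le> mat_opnorm m n (schur_prod M X')"
    unfolding y_def by (rule opnorm_ge[OF v1])
  finally show ?thesis using S1 unfolding r_def M_def by simp
qed



definition Sg :: "(nat \<times> nat) set \<Rightarrow> nat \<Rightarrow> nat \<Rightarrow> real" where
  "Sg E i j = (if (i,j) \<in> E then 1 else -1)"

definition WW :: "nat \<Rightarrow> (nat \<times> nat) set \<Rightarrow> real" where
  "WW k E = (\<Sum>j<k. \<Sum>l<k. (\<Sum>i<k. Sg E i j * Sg E i l)^2)"

lemma expect_eq: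
  "expect_G m n (1/2) f = (\<Sum>E\<in>Pow ({..<m} \<times> {..<n}). f E) / 2^(m*n)"
proof -
  have "expect_G m n (1/2) f = (\<Sum>E\<in>Pow ({..<m} \<times> {..<n}). f E / 2^(m*n))"
    unfolding expect_G_def
  proof (rule sum.cong[OF refl])
    fix E assume E: "E \<in> Pow ({..<m} \<times> {..<n})"
    have "card E \<le> card ({..<m} \<times> {..<n})" using E by (intro card_mono) auto
    then have c: "card E \<le> m * n" by (simp add: card_cartesian_product)
    have "(1/2::real) ^ card E * (1 - 1/2) ^ (m * n - card E) = (1/2) ^ (card E + (m * n - card E))"
      by (simp add: power_add)
    also have "\<dots> = (1/2) ^ (m * n)" using c by simp
    finally show "(1/2::real) ^ card E * (1 - 1/2) ^ (m * n - card E) * f E = f E / 2^(m*n)"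
      by (simp add: power_divide)
  qed
  then show ?thesis by (simp add: sum_divide_distrib)
qed

lemma flip_zero:
  assumes U: "finite U" and p: "p \<in> U" and h: "\<And>A. h (A - {p}) = (h A :: real)"
  shows "(\<Sum>E\<in>Pow U. (if p \<in> E then 1 else -1) * h E) = 0"
proof -
  define V where "V = U - {p}"
  have UV: "U = insert p V" using p by (auto simp: V_def)
  have pV: "p \<notin> V" by (simp add: V_def)
  have fV: "finite V" using U by (simp add: V_def)
  have disj: "Pow V \<inter> insert p ` Pow V = {}" using pV by auto
  have inj: "inj_on (insert p) (Pow V)" using pV by (auto simp: inj_on_def)
  have "(\<Sum>E\<in>Pow U. (if p \<in> E then 1 else -1) * h E)
      = (\<Sum>E\<in>Pow V. (if p \<in> E then 1 else -1) * h E) + (\<Sum>E\<in>insert p ` Pow V. (if p \<in> E then 1 else -1) * h E)"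
    unfolding UV Pow_insert using fV disj by (intro sum.union_disjoint) auto
  also have "(\<Sum>E\<in>insert p ` Pow V. (if p \<in> E then 1 else -1) * h E) = (\<Sum>E\<in>Pow V. h (insert p E))"
    by (subst sum.reindex[OF inj]) simp
  also have "(\<Sum>E\<in>Pow V. h (insert p E)) = (\<Sum>E\<in>Pow V. h E)"
  proof (rule sum.cong[OF refl])
    fix E assume "E \<in> Pow V"
    then have "p \<notin> E" using pV by auto
    then have "insert p E - {p} = E" by auto
    then show "h (insert p E) = h E" using h[of "insert p E"] by simp
  qed
  also have "(\<Sum>E\<in>Pow V. (if p \<in> E then 1 else -1) * h E) = - (\<Sum>E\<in>Pow V. h E)"
    by (subst sum_negf[symmetric], rule sum.cong) (use pV in auto)
  finally show ?thesis by simp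
qed

lemma term_bound:
  assumes k: "k \<le> m" "k \<le> n" and ijl: "i < k" "i' < k" "j < k" "l < k"
  shows "(\<Sum>E\<in>Pow ({..<m} \<times> {..<n}). Sg E i j * Sg E i l * Sg E i' j * Sg E i' l)
         \<le> (if i = i' \<or> j = l then 2^(m*n) else 0)"
proof -
  let ?U = "{..<m} \<times> {..<n}"
  have cardP: "card (Pow ?U) = 2^(m*n)" by (simp add: card_Pow card_cartesian_product)
  have SS: "Sg E a b * Sg E a b = 1" for E a b by (simp add: Sg_def)
  show ?thesis
  proof (cases "i = i' \<or> j = l")
    case True
    then have "Sg E i j * Sg E i l * Sg E i' j * Sg E i' l = 1" for E
      by (auto simp: Sg_def)
    then show ?thesis using True cardP by simp
  next
    case False
    define h where "h = (\<lambda>E. Sg E i l * Sg E i' j * Sg E i' l)"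
    have h: "h (A - {(i,j)}) = h A" for A
      using False unfolding h_def Sg_def by auto
    have p: "(i,j) \<in> ?U" using k ijl by auto
    have "(\<Sum>E\<in>Pow ?U. Sg E i j * Sg E i l * Sg E i' j * Sg E i' l)
        = (\<Sum>E\<in>Pow ?U. (if (i,j) \<in> E then 1 else -1) * h E)"
      by (simp add: h_def Sg_def mult.assoc)
    also have "\<dots> = 0" by (rule flip_zero[where p="(i,j)"]) (use p h in auto)
    finally show ?thesis using False by simp
  qed
qed

lemma WW_sum:
  assumes k: "k \<le> m" "k \<le> n"
  shows "(\<Sum>E\<in>Pow ({..<m} \<times> {..<n}). WW k E) \<le> 2 * real k ^ 3 * 2^(m*n)"
proof -
  let ?P = "Pow ({..<m} \<times> {..<n})"
  have W: "WW k E = (\<Sum>j<k. \<Sum>l<k. \<Sum>i<k. \<Sum>i'<k. Sg E i j * Sg E i l * Sg E i' j * Sg E i' l)" for E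
    unfolding WW_def power2_eq_square sum_product by (simp add: mult.assoc mult.left_commute)
  have "(\<Sum>E\<in>?P. WW k E) = (\<Sum>j<k. \<Sum>l<k. \<Sum>i<k. \<Sum>i'<k. \<Sum>E\<in>?P. Sg E i j * Sg E i l * Sg E i' j * Sg E i' l)"
    unfolding W by (simp only: sum.swap[of _ ?P])
  also have "\<dots> \<le> (\<Sum>j<k. \<Sum>l<k. \<Sum>i<k. \<Sum>i'<k. (if i = i' then 2^(m*n) else 0) + (if j = l then 2^(m*n) else 0))"
    by (intro sum_mono order.trans[OF term_bound[OF k]]) auto
  also have "\<dots> = 2 * real k ^ 3 * 2^(m*n)"
  proof -
    define C :: real where "C = 2^(m*n)"
    have i1: "(\<Sum>i'<k. (if i = i' then C else 0) + (if j = l then C else 0)) = C + real k * (if j = l then C else 0)"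
      if "i < k" for i j l :: nat using that by (simp add: sum.distrib)
    have i2: "(\<Sum>i<k. C + real k * (if j = l then C else 0)) = real k * C + real k * real k * (if j = l then C else 0)" for j l :: nat
      by (simp add: algebra_simps)
    have i3: "(\<Sum>l<k. real k * C + real k * real k * (if j = l then C else 0)) = real k * real k * C + real k * real k * C" if "j < k" for j
      using that by (simp add: sum.distrib if_distrib[of "\<lambda>t. real k * real k * t"] cong: if_cong)
    have "(\<Sum>j<k. \<Sum>l<k. \<Sum>i<k. \<Sum>i'<k. (if i = i' then C else 0) + (if j = l then C else 0))
       = (\<Sum>j<k. \<Sum>l<k. \<Sum>i<k. C + real k * (if j = l then C else 0))"
      by (intro sum.cong refl) (auto simp: i1)
    also have "\<dots> = (\<Sum>j<k. \<Sum>l<k. real k * C + real k * real k * (if j = l then C else 0))"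
      by (simp only: i2)
    also have "\<dots> = (\<Sum>j<k. real k * real k * C + real k * real k * C)"
      by (intro sum.cong refl) (auto simp: i3)
    also have "\<dots> = 2 * real k ^ 3 * C" by (simp add: power3_eq_cube)
    finally show ?thesis unfolding C_def[symmetric] .
  qed
  finally show ?thesis .
qed



lemma transfer_real:
  assumes "\<forall>x. ip k (mv k X x) (mv k X x) \<le> ip k x x"
  shows "\<forall>x::nat\<Rightarrow>real. (\<Sum>i<k. (norm (\<Sum>j<k. of_real (X i j) * x j))^2) \<le> (\<Sum>j<k. (norm (x j))^2)"
  using assms by (simp add: ip_def mv_def power2_eq_square)

lemma transfer_complex:
  assumes A: "\<forall>x. ip k (mv k X x) (mv k X x) \<le> ip k x x"
  shows "\<forall>x::nat\<Rightarrow>complex. (\<Sum>i<k. (norm (\<Sum>j<k. of_real (X i j) * x j))^2) \<le> (\<Sum>j<k. (norm (x j))^2)"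
proof
  fix x :: "nat \<Rightarrow> complex"
  define a where "a = (\<lambda>j. Re (x j))"
  define b where "b = (\<lambda>j. Im (x j))"
  have "(\<Sum>i<k. (norm (\<Sum>j<k. of_real (X i j) * x j))^2)
      = (\<Sum>i<k. (mv k X a i)^2 + (mv k X b i)^2)"
    by (intro sum.cong refl) (simp add: cmod_power2 Re_sum Im_sum mv_def a_def b_def)
  also have "\<dots> = ip k (mv k X a) (mv k X a) + ip k (mv k X b) (mv k X b)"
    by (simp add: ip_def sum.distrib power2_eq_square)
  also have "\<dots> \<le> ip k a a + ip k b b" using A by (simp add: add_mono)
  also have "\<dots> = (\<Sum>j<k. (Re (x j))^2 + (Im (x j))^2)"
    by (simp add: ip_def sum.distrib a_def b_def power2_eq_square)
  also have "\<dots> = (\<Sum>j<k. (norm (x j))^2)"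
    by (simp add: cmod_power2)
  finally show "(\<Sum>i<k. (norm (\<Sum>j<k. of_real (X i j) * x j))^2) \<le> (\<Sum>j<k. (norm (x j))^2)" .
qed

lemma per_E_gen:
  assumes k: "0 < k" "k \<le> m" "k \<le> n" and s: "s > 0"
  and transfer: "\<And>X. (\<forall>x. ip k (mv k X x) (mv k X x) \<le> ip k x x) \<Longrightarrow>
     (\<forall>x::nat\<Rightarrow>'a::real_normed_field. (\<Sum>i<k. (norm (\<Sum>j<k. of_real (X i j) * x j))^2) \<le> (\<Sum>j<k. (norm (x j))^2))"
  shows "- 1/2 + k / s - WW k E / (k * s^3) \<le> schur_norm m n (biadj E :: nat \<Rightarrow> nat \<Rightarrow> 'a)"
proof -
  obtain X where X1: "\<forall>x. ip k (mv k X x) (mv k X x) \<le> ip k x x"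
    and X2: "(\<Sum>l<k. \<Sum>i<k. Sg E i l * X i l) \<ge>
       2 * s * (\<Sum>l<k. (\<Sum>i<k. Sg E i l * Sg E i l) / s^2 - (\<Sum>j<k. (\<Sum>i<k. Sg E i j * Sg E i l)^2) / s^4)"
    using core[OF s, of k "Sg E"] by blast
  have SS: "Sg E i l * Sg E i l = 1" for i l by (simp add: Sg_def)
  have X2': "(\<Sum>l<k. \<Sum>i<k. Sg E i l * X i l) \<ge> 2 * k^2 / s - 2 * WW k E / s^3"
  proof -
    have "2 * s * (\<Sum>l<k. (\<Sum>i<k. Sg E i l * Sg E i l) / s^2 - (\<Sum>j<k. (\<Sum>i<k. Sg E i j * Sg E i l)^2) / s^4)
        = 2 * s * (k * k / s^2 - WW k E / s^4)"
    proof -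
      have w: "(\<Sum>l<k. (\<Sum>j<k. (\<Sum>i<k. Sg E i j * Sg E i l)^2)) = WW k E"
        unfolding WW_def by (rule sum.swap)
      show ?thesis
        by (simp only: SS sum_subtractf sum_divide_distrib[symmetric] w) simp
    qed
    also have "\<dots> = 2 * k^2 / s - 2 * WW k E / s^3"
      using s by (simp add: field_simps power2_eq_square power3_eq_cube power4_eq_xxxx)
    finally show ?thesis using X2 by simp
  qed
  define one :: "nat \<Rightarrow> real" where "one = (\<lambda>_. 1)"
  have sumX: "(\<Sum>i<k. \<Sum>l<k. X i l) \<ge> - real k"
  proof -
    have e: "(\<Sum>i<k. \<Sum>l<k. X i l) = ip k one (mv k X one)" by (simp add: ip_def mv_def one_def)
    have "0 \<le> ip k (\<lambda>i. 1 * one i + 1 * mv k X one i) (\<lambda>i. 1 * one i + 1 * mv k X one i)"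
      by (rule nsq_nonneg)
    then have "0 \<le> ip k one one + 2 * ip k one (mv k X one) + ip k (mv k X one) (mv k X one)"
      unfolding nsq_lin by simp
    moreover have "ip k one one = k" by (simp add: ip_def one_def)
    moreover have "ip k (mv k X one) (mv k X one) \<le> ip k one one" using X1 by blast
    ultimately show ?thesis unfolding e by linarith
  qed
  have Mi: "(if (i,l) \<in> E then 1 else 0) * X i l = (X i l + Sg E i l * X i l) / 2" for i l
    by (simp add: Sg_def)
  have "(\<Sum>i<k. \<Sum>l<k. (if (i,l) \<in> E then 1 else 0) * X i l)
      = (\<Sum>i<k. \<Sum>l<k. (X i l + Sg E i l * X i l) / 2)" by (simp only: Mi)
  also have "\<dots> = (\<Sum>i<k. \<Sum>l<k. X i l + Sg E i l * X i l) / 2"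
    by (simp only: sum_divide_distrib)
  also have "\<dots> = ((\<Sum>i<k. \<Sum>l<k. X i l) + (\<Sum>i<k. \<Sum>l<k. Sg E i l * X i l)) / 2"
    by (simp only: sum.distrib)
  also have "(\<Sum>i<k. \<Sum>l<k. Sg E i l * X i l) = (\<Sum>l<k. \<Sum>i<k. Sg E i l * X i l)"
    by (rule sum.swap)
  finally have eqM: "(\<Sum>i<k. \<Sum>l<k. (if (i,l) \<in> E then 1 else 0) * X i l)
      = ((\<Sum>i<k. \<Sum>l<k. X i l) + (\<Sum>l<k. \<Sum>i<k. Sg E i l * X i l)) / 2" .
  have ge: "(\<Sum>i<k. \<Sum>l<k. (if (i,l) \<in> E then 1 else 0) * X i l) \<ge> (- real k + (2 * k^2 / s - 2 * WW k E / s^3)) / 2"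
    unfolding eqM by (intro divide_right_mono add_mono) (use sumX X2' in auto)
  have kpos: "real k > 0" using k by simp
  have L: "(- real k + (2 * k^2 / s - 2 * WW k E / s^3)) / 2 / k \<le>
      (\<Sum>i<k. \<Sum>l<k. (if (i,l) \<in> E then 1 else 0) * X i l) / k"
    using divide_right_mono[OF ge, of "real k"] kpos by simp
  have "(- real k + (2 * k^2 / s - 2 * WW k E / s^3)) / 2 / k = - 1/2 + k / s - WW k E / (k * s^3)"
    using kpos s by (simp add: field_simps power2_eq_square)
  moreover have "(\<Sum>i<k. \<Sum>l<k. (if (i,l) \<in> E then 1 else 0) * X i l) / k \<le> schur_norm m n (biadj E :: nat \<Rightarrow> nat \<Rightarrow> 'a)"
    by (rule schur_lower[OF k]) (use transfer[OF X1] in blast)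
  ultimately show ?thesis using L by linarith
qed

lemma schur_nonneg:
  assumes M: "\<And>i j. norm (M i j) \<le> (1::real)"
  shows "0 \<le> schur_norm m n M"
proof -
  define Z :: "nat \<Rightarrow> nat \<Rightarrow> 'a" where "Z = (\<lambda>_ _. 0)"
  have "mat_opnorm m n Z \<le> Bsum m n Z" by (rule opnorm_le_Bsum)
  also have "Bsum m n Z = 0" by (simp add: Bsum_def Z_def)
  finally have Z1: "mat_opnorm m n Z \<le> 1" by simp
  have "l2norm n (\<lambda>_. 0::'a) \<le> 1" by (simp add: l2norm_def)
  then have "l2norm m (mat_apply n (schur_prod M Z) (\<lambda>_. 0)) \<le> mat_opnorm m n (schur_prod M Z)"
    by (rule opnorm_ge)
  also have "\<dots> \<le> schur_norm m n M" by (rule schur_ge[OF M Z1])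
  finally show ?thesis using l2norm_nonneg[of m "mat_apply n (schur_prod M Z) (\<lambda>_. 0)"] by linarith
qed

lemma final_arith:
  fixes t r :: real
  assumes t: "t > 0" and r: "r > 0" "r * r = 2"
  shows "1/8 * (t / r) - 1 \<le> - 1/2 + t^2 / (2 * r * t) - 2 * (t^2)^2 / (2 * r * t)^3"
proof -
  have a: "t^2 / (2 * r * t) = (t / r) / 2" using t r by (simp add: field_simps power2_eq_square)
  have b: "2 * (t^2)^2 / (2 * r * t)^3 = (t / r) / 8"
  proof -
    have "(2 * r * t)^3 = 8 * (r * r) * r * t^3" by (simp add: power3_eq_cube algebra_simps)
    also have "\<dots> = 16 * r * t^3" using r by simp
    finally have "2 * (t^2)^2 / (2 * r * t)^3 = 2 * t^4 / (16 * r * t^3)" by (simp add: power_mult[symmetric])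
    also have "\<dots> = (t / r) / 8" using t r by (simp add: field_simps power3_eq_cube power4_eq_xxxx)
    finally show ?thesis .
  qed
  have "t / r \<ge> 0" using t r by simp
  then show ?thesis unfolding a b by linarith
qed

lemma main_gen:
  assumes transfer: "\<And>k X. (\<forall>x. ip k (mv k X x) (mv k X x) \<le> ip k x x) \<Longrightarrow>
     (\<forall>x::nat\<Rightarrow>'a::real_normed_field. (\<Sum>i<k. (norm (\<Sum>j<k. of_real (X i j) * x j))^2) \<le> (\<Sum>j<k. (norm (x j))^2))"
  shows "1/8 * sqrt (real (min m n) / 2) - 1 \<le> expect_G m n (1/2) (\<lambda>E. schur_norm m n (biadj E :: nat \<Rightarrow> nat \<Rightarrow> 'a))"
proof -
  define k where "k = min m n"
  let ?P = "Pow ({..<m} \<times> {..<n})"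
  let ?f = "\<lambda>E. schur_norm m n (biadj E :: nat \<Rightarrow> nat \<Rightarrow> 'a)"
  have N: "(2::real)^(m*n) > 0" by simp
  have cardP: "card ?P = 2^(m*n)" by (simp add: card_Pow card_cartesian_product)
  have B1: "norm (biadj E i j :: 'a) \<le> 1" for E i j by (simp add: biadj_def)
  show ?thesis
  proof (cases "k = 0")
    case True
    have "0 \<le> (\<Sum>E\<in>?P. ?f E) / 2^(m*n)"
      by (intro divide_nonneg_pos sum_nonneg schur_nonneg B1 N)
    then show ?thesis unfolding expect_eq using True by (simp add: k_def)
  next
    case False
    then have k: "0 < k" "k \<le> m" "k \<le> n" by (auto simp: k_def)
    define t where "t = sqrt (real k)"
    define r where "r = sqrt (2::real)"
    define s where "s = 2 * r * t"
    have t: "t > 0" using k by (simp add: t_def)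
    have r: "r > 0" "r * r = 2" by (simp_all add: r_def)
    have s: "s > 0" using t r by (simp add: s_def)
    have kt: "real k = t^2" using k by (simp add: t_def)
    let ?g = "\<lambda>E. (- 1/2 + k / s) - WW k E / (k * s^3)"
    have fg: "?g E \<le> ?f E" for E
      using per_E_gen[OF k s transfer] by simp
    have "(\<Sum>E\<in>?P. ?g E) = 2^(m*n) * (- 1/2 + k / s) - (\<Sum>E\<in>?P. WW k E) / (k * s^3)"
      by (simp add: sum_subtractf sum_divide_distrib[symmetric] cardP)
    also have "\<dots> \<ge> 2^(m*n) * (- 1/2 + k / s) - (2 * real k ^ 3 * 2^(m*n)) / (k * s^3)"
      using WW_sum[OF k(2,3)] k s by (intro diff_left_mono divide_right_mono) auto
    finally have gsum: "2^(m*n) * (- 1/2 + k / s) - (2 * real k ^ 3 * 2^(m*n)) / (k * s^3) \<le> (\<Sum>E\<in>?P. ?g E)" .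
    have "(\<Sum>E\<in>?P. ?f E) \<ge> 2^(m*n) * (- 1/2 + k / s) - (2 * real k ^ 3 * 2^(m*n)) / (k * s^3)"
    proof -
      have "(\<Sum>E\<in>?P. ?g E) \<le> (\<Sum>E\<in>?P. ?f E)" by (rule sum_mono) (rule fg)
      then show ?thesis using gsum by linarith
    qed
    then have "expect_G m n (1/2) ?f \<ge> (2^(m*n) * (- 1/2 + k / s) - (2 * real k ^ 3 * 2^(m*n)) / (k * s^3)) / 2^(m*n)"
      unfolding expect_eq using N by (simp add: divide_right_mono)
    also have "(2^(m*n) * (- 1/2 + k / s) - (2 * real k ^ 3 * 2^(m*n)) / (k * s^3)) / 2^(m*n)
        = - 1/2 + k / s - 2 * (real k)^2 / s^3"
      using N k s by (simp add: field_simps power2_eq_square power3_eq_cube)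
    also have "\<dots> = - 1/2 + t^2 / (2 * r * t) - 2 * (t^2)^2 / (2 * r * t)^3"
      by (simp add: kt s_def)
    finally have E: "- 1/2 + t^2 / (2 * r * t) - 2 * (t^2)^2 / (2 * r * t)^3 \<le> expect_G m n (1/2) ?f" .
    have "sqrt (real (min m n) / 2) = t / r"
      by (simp add: k_def[symmetric] t_def r_def real_sqrt_divide)
    then show ?thesis using final_arith[OF t r] E by simp
  qed
qed

theorem proposition8p4:
  fixes m n :: nat
  defines "k \<equiv> min m n"
  shows "expect_G m n (1/2) (\<lambda>E. graph_norm m n E TYPE(real)) \<ge> 1/8 * sqrt (real k / 2) - 1
       \<and> expect_G m n (1/2) (\<lambda>E. graph_norm m n E TYPE(complex)) \<ge> 1/8 * sqrt (real k / 2) - 1"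
  unfolding k_def graph_norm_def
  using main_gen[OF transfer_real] main_gen[OF transfer_complex] by blast


end
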